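(* Consider $N$ agents $\mathcal{V}=\{1,\dots,N\}$ interacting over a fixed graph in which agent $i$ has the nonempty neighbor set $\mathcal{N}_i$ of cardinality $n_i$. Let $\beta\in[0,1]$ and let $(q_p(k))_{k\ge0}$ be a sequence with values in $\{-1,1\}$. The opinions evolve by $$\theta_i(k+1)=\theta_i(k)+\bigl(1-\theta_i(k)^2\bigr)\Bigl[\beta\bigl(q_p(k)-\theta_i(k)\bigr)+(1-\beta)\frac{1}{n_i}\sum_{j\in\mathcal{N}_i}\bigl(q_j(k)-\theta_i(k)\bigr)\Bigr],$$ with actions $q_j(k)=1$ if $\theta_j(k)>0$ or ($\theta_j(k)=0$ and $q_j(k-1)=1$), and $q_j(k)=-1$ if $\theta_j(k)<0$ or ($\theta_j(k)=0$ and $q_j(k-1)=-1$). Let $f_i(k)=(1-\beta)\frac{n_i^+(k)-n_i^-(k)}{n_i}+\beta q_p(k)$, where $n_i^{\pm}(k)=|\{j\in\mathcal{N}_i:q_j(k)=\pm1\}|$. Let $i\in\mathcal{V}$ with $\theta_i(0)\in(-1,1)$. Then for every $k$: 1. if $f_i(k)\ge 0$ and $q_i(k)=1$, then $q_i(k+1)=1$; 2. if $f_i(k)\le 0$ and $q_i(k)=-1$, then $q_i(k+1)=-1$.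
   Context: Opinions take values in $[-1,1]$. The neighbor set $\mathcal{N}_i$ consists of the agents $j$ with $(j,i)$ an edge of the graph. *)

theory Defs
  imports Complex_Main
begin

definition n_plus :: "(nat \<Rightarrow> nat set) \<Rightarrow> (nat \<Rightarrow> nat \<Rightarrow> real) \<Rightarrow> nat \<Rightarrow> nat \<Rightarrow> nat" where
  "n_plus Nb q i k = card {j \<in> Nb i. q j k = 1}"

definition n_minus :: "(nat \<Rightarrow> nat set) \<Rightarrow> (nat \<Rightarrow> nat \<Rightarrow> real) \<Rightarrow> nat \<Rightarrow> nat \<Rightarrow> nat" where
  "n_minus Nb q i k = card {j \<in> Nb i. q j k = -1}"

definition f_drive :: "real \<Rightarrow> (nat \<Rightarrow> real) \<Rightarrow> (nat \<Rightarrow> nat set) \<Rightarrow> (nat \<Rightarrow> nat \<Rightarrow> real) \<Rightarrow> nat \<Rightarrow> nat \<Rightarrow> real" where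
  "f_drive \<beta> qp Nb q i k =
     (1 - \<beta>) * ((real (n_plus Nb q i k) - real (n_minus Nb q i k)) / real (card (Nb i))) + \<beta> * qp k"

end

theory Submission
  imports Defs
begin

theorem mainTheorem3:
  fixes N :: nat and Nb :: "nat \<Rightarrow> nat set" and \<beta> :: real
    and qp :: "nat \<Rightarrow> real" and \<theta> q :: "nat \<Rightarrow> nat \<Rightarrow> real" and i :: nat
  assumes nbhd: "\<And>j. j \<in> {1..N} \<Longrightarrow> Nb j \<subseteq> {1..N} \<and> Nb j \<noteq> {}"
    and beta: "0 \<le> \<beta>" "\<beta> \<le> 1"
    and qp: "\<And>k. qp k \<in> {-1, 1}"
    and init: "\<And>j. j \<in> {1..N} \<Longrightarrow> \<theta> j 0 \<in> {-1..1}"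
    and dyn: "\<And>j k. j \<in> {1..N} \<Longrightarrow>
       \<theta> j (Suc k) = \<theta> j k + (1 - (\<theta> j k)\<^sup>2) *
         (\<beta> * (qp k - \<theta> j k)
          + (1 - \<beta>) * (1 / real (card (Nb j))) * (\<Sum>l\<in>Nb j. q l k - \<theta> j k))"
    and qvals: "\<And>j k. j \<in> {1..N} \<Longrightarrow> q j k \<in> {-1, 1}"
    and qpos: "\<And>j k. j \<in> {1..N} \<Longrightarrow> \<theta> j k > 0 \<Longrightarrow> q j k = 1"
    and qneg: "\<And>j k. j \<in> {1..N} \<Longrightarrow> \<theta> j k < 0 \<Longrightarrow> q j k = -1"
    and qzero: "\<And>j k. j \<in> {1..N} \<Longrightarrow> \<theta> j (Suc k) = 0 \<Longrightarrow> q j (Suc k) = q j k"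
    and iV: "i \<in> {1..N}"
    and thi0: "\<theta> i 0 \<in> {-1<..<1}"
  shows "\<forall>k. (f_drive \<beta> qp Nb q i k \<ge> 0 \<and> q i k = 1 \<longrightarrow> q i (Suc k) = 1)
           \<and> (f_drive \<beta> qp Nb q i k \<le> 0 \<and> q i k = -1 \<longrightarrow> q i (Suc k) = -1)"
proof -
  have fin: "finite (Nb i)"
    using nbhd[OF iV] finite_subset[of "Nb i" "{1..N}"] by auto
  have cardpos: "card (Nb i) > 0"
    using nbhd[OF iV] fin by (auto simp: card_gt_0_iff)
  have qN: "\<And>l k. l \<in> Nb i \<Longrightarrow> q l k \<in> {-1,1}" using nbhd[OF iV] qvals by blast
  have sumq: "(\<Sum>l\<in>Nb i. q l k) = real (n_plus Nb q i k) - real (n_minus Nb q i k)" for k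
  proof -
    have "(\<Sum>l\<in>Nb i. q l k) = (\<Sum>l\<in>Nb i. (if q l k = 1 then 1 else 0) - (if q l k = -1 then 1 else 0))"
      by (rule sum.cong) (use qN in auto)
    also have "\<dots> = real (n_plus Nb q i k) - real (n_minus Nb q i k)"
      unfolding n_plus_def n_minus_def using fin by (simp add: sum_subtractf sum.If_cases Collect_conj_eq Int_commute)
    finally show ?thesis .
  qed
  have sumb: "\<bar>\<Sum>l\<in>Nb i. q l k\<bar> \<le> real (card (Nb i))" for k
  proof -
    have "\<bar>\<Sum>l\<in>Nb i. q l k\<bar> \<le> (\<Sum>l\<in>Nb i. \<bar>q l k\<bar>)" by (rule sum_abs)
    also have "\<dots> = (\<Sum>l\<in>Nb i. 1)" proof (rule sum.cong)
      fix x assume "x \<in> Nb i" then have "q x k \<in> {-1,1}" by (rule qN)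
      then show "\<bar>q x k\<bar> = 1" by auto
    qed simp
    finally show ?thesis by simp
  qed
  have fb: "\<bar>f_drive \<beta> qp Nb q i k\<bar> \<le> 1" for k
  proof -
    have a: "\<bar>(\<Sum>l\<in>Nb i. q l k) / real (card (Nb i))\<bar> \<le> 1"
      using sumb[of k] cardpos by (simp add: pos_divide_le_eq)
    have b: "\<bar>qp k\<bar> \<le> 1" using qp[of k] by auto
    have "f_drive \<beta> qp Nb q i k = (1 - \<beta>) * ((\<Sum>l\<in>Nb i. q l k) / real (card (Nb i))) + \<beta> * qp k"
      unfolding f_drive_def sumq ..
    moreover have "\<bar>(1 - \<beta>) * ((\<Sum>l\<in>Nb i. q l k) / real (card (Nb i))) + \<beta> * qp k\<bar> \<le> 1"
    proof -
      have "\<bar>(1 - \<beta>) * ((\<Sum>l\<in>Nb i. q l k) / real (card (Nb i)))\<bar> \<le> (1-\<beta>)"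
        using mult_left_le[OF a, of "1-\<beta>"] beta by (simp only: abs_mult) simp
      moreover have "\<bar>\<beta> * qp k\<bar> \<le> \<beta>" using b beta by (simp add: abs_mult mult_left_le)
      ultimately show ?thesis by linarith
    qed
    ultimately show ?thesis by simp
  qed
  have step: "\<theta> i (Suc k) = (\<theta> i k)^3 + (1 - (\<theta> i k)\<^sup>2) * f_drive \<beta> qp Nb q i k" for k
  proof -
    have hs: "(\<Sum>l\<in>Nb i. q l k - \<theta> i k) = (\<Sum>l\<in>Nb i. q l k) - real (card (Nb i)) * \<theta> i k"
      by (simp add: sum_subtractf)
    have e1: "(1 / real (card (Nb i))) * (\<Sum>l\<in>Nb i. q l k - \<theta> i k)
        = (real (n_plus Nb q i k) - real (n_minus Nb q i k)) / real (card (Nb i)) - \<theta> i k"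
      unfolding hs sumq using cardpos by (simp add: field_simps)
    have eqA: "(1 - \<beta>) * (1 / real (card (Nb i))) * (\<Sum>l\<in>Nb i. q l k - \<theta> i k)
        = (1 - \<beta>) * ((real (n_plus Nb q i k) - real (n_minus Nb q i k)) / real (card (Nb i)) - \<theta> i k)"
      by (simp only: mult.assoc e1)
    show ?thesis unfolding dyn[OF iV, of k] eqA f_drive_def
      by (simp add: algebra_simps power2_eq_square power3_eq_cube)
  qed
  have inv: "\<bar>\<theta> i k\<bar> \<le> 1" for k
  proof (induction k)
    case 0 then show ?case using init[OF iV] by auto
  next
    case (Suc k)
    define t where "t = \<theta> i k"
    define f where "f = f_drive \<beta> qp Nb q i k"
    have t2: "0 \<le> t^2" "t^2 \<le> 1" using Suc unfolding t_def by (simp_all add: abs_square_le_1)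
    have "\<theta> i (Suc k) = t^2 * t + (1 - t^2) * f" unfolding step t_def f_def by (simp add: power2_eq_square power3_eq_cube)
    moreover have "\<bar>t^2 * t + (1 - t^2) * f\<bar> \<le> 1"
    proof -
      have "\<bar>t^2 * t\<bar> \<le> t^2" using Suc t2 unfolding t_def by (simp add: abs_mult mult_left_le)
      moreover have "\<bar>(1 - t^2) * f\<bar> \<le> 1 - t^2" using fb[of k] t2 unfolding f_def by (simp add: abs_mult mult_left_le)
      ultimately show ?thesis by linarith
    qed
    ultimately show ?case by simp
  qed
  show ?thesis
  proof (intro allI conjI impI)
    fix k
    define t where "t = \<theta> i k"
    define f where "f = f_drive \<beta> qp Nb q i k"
    have tb: "\<bar>t\<bar> \<le> 1" using inv unfolding t_def by blast
    have t2: "t^2 \<le> 1" using tb by (simp add: abs_square_le_1)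
    have st: "\<theta> i (Suc k) = t^2 * t + (1 - t^2) * f" unfolding step t_def f_def by (simp add: power2_eq_square power3_eq_cube)
    {
      assume h: "f_drive \<beta> qp Nb q i k \<ge> 0 \<and> q i k = 1"
      have "t \<ge> 0" using h qneg[OF iV, of k] unfolding t_def by force
      then have "\<theta> i (Suc k) \<ge> 0" using h t2 unfolding st f_def by simp
      then show "q i (Suc k) = 1"
        using qpos[OF iV] qzero[OF iV, of k] h by (cases "\<theta> i (Suc k) = 0") auto
    }
    {
      assume h: "f_drive \<beta> qp Nb q i k \<le> 0 \<and> q i k = -1"
      have "t \<le> 0" using h qpos[OF iV, of k] unfolding t_def by force
      then have "\<theta> i (Suc k) \<le> 0"
      proof -
        have "t^2 * t \<le> 0" using \<open>t \<le> 0\<close> by (simp add: mult_nonneg_nonpos)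
        moreover have "(1 - t^2) * f_drive \<beta> qp Nb q i k \<le> 0" using h t2 by (simp add: mult_nonneg_nonpos)
        ultimately show ?thesis unfolding st f_def by linarith
      qed
      then show "q i (Suc k) = -1"
        using qneg[OF iV] qzero[OF iV, of k] h by (cases "\<theta> i (Suc k) = 0") auto
    }
  qed
qed

end
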